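(* Let $A$ and $B$ be differential rings and $\nu\colon A\to B$ a differential homomorphism. Suppose $B$ is differentially generated over $\nu(A)$ by finitely many elements $\eta_1,\ldots,\eta_m$, and that for each generator $\eta_j$ there exist $b_1,\ldots,b_n\in A$ (depending on $j$) such that $\nu(b_k)\eta_j\in\nu(A)$ for all $k$ and $\{b_1,\ldots,b_n\}=A$. Then the contraction map $\nu^*\colon\operatorname{Spec}^\Delta B\to V(\ker\nu)$, $\mathfrak q\mapsto \nu^{-1}(\mathfrak q)$, is a homeomorphism, where $V(\ker\nu)\subseteq\operatorname{Spec}^\Delta A$ carries the subspace topology.
   Context: All rings are commutative with unit; homomorphisms preserve the unit. A differential ring is a ring equipped with finitely many pairwise commuting derivations; a differential homomorphism is a ring homomorphism commuting with the derivations. $B$ is differentially generated over $\nu(A)$ by $\eta_1,\dots,\eta_m$ if $B$ is the smallest differential subring of $B$ containing $\nu(A)$ and $\eta_1,\dots,\eta_m$. For a differential ring $A$, $\operatorname{Spec}^\Delta A$ is the set of prime ideals of $A$ closed under all the derivations (prime differential ideals); for $E\subseteq A$, $V(E)$ is the set of prime differential ideals containing $E$, and the sets $V(E)$ are the closed sets of the Kolchin topology on $\operatorname{Spec}^\Delta A$. For $E\subseteq A$, $\{E\}$ denotes the smallest radical differential ideal of $A$ containing $E$. *)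

theory Defs
  imports "HOL-Analysis.Abstract_Topology"
begin

definition derivation :: "('a::comm_ring_1 \<Rightarrow> 'a) \<Rightarrow> bool" where
  "derivation d \<longleftrightarrow> (\<forall>x y. d (x + y) = d x + d y) \<and> (\<forall>x y. d (x * y) = x * d y + d x * y)"

definition diff_ring :: "('i::finite \<Rightarrow> 'a::comm_ring_1 \<Rightarrow> 'a) \<Rightarrow> bool" where
  "diff_ring D \<longleftrightarrow> (\<forall>i. derivation (D i)) \<and> (\<forall>i j x. D i (D j x) = D j (D i x))"

definition ring_hom_fun :: "('a::comm_ring_1 \<Rightarrow> 'b::comm_ring_1) \<Rightarrow> bool" where
  "ring_hom_fun f \<longleftrightarrow> f 1 = 1 \<and> (\<forall>x y. f (x + y) = f x + f y) \<and> (\<forall>x y. f (x * y) = f x * f y)"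

definition diff_hom :: "('i \<Rightarrow> 'a::comm_ring_1 \<Rightarrow> 'a) \<Rightarrow> ('i \<Rightarrow> 'b::comm_ring_1 \<Rightarrow> 'b) \<Rightarrow> ('a \<Rightarrow> 'b) \<Rightarrow> bool" where
  "diff_hom DA DB f \<longleftrightarrow> ring_hom_fun f \<and> (\<forall>i x. f (DA i x) = DB i (f x))"

definition is_ideal :: "'a::comm_ring_1 set \<Rightarrow> bool" where
  "is_ideal I \<longleftrightarrow> 0 \<in> I \<and> (\<forall>x\<in>I. \<forall>y\<in>I. x + y \<in> I) \<and> (\<forall>x\<in>I. - x \<in> I) \<and> (\<forall>r. \<forall>x\<in>I. r * x \<in> I)"

definition is_prime_ideal :: "'a::comm_ring_1 set \<Rightarrow> bool" where
  "is_prime_ideal P \<longleftrightarrow> is_ideal P \<and> P \<noteq> UNIV \<and> (\<forall>x y. x * y \<in> P \<longrightarrow> x \<in> P \<or> y \<in> P)"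

definition diff_closed :: "('i \<Rightarrow> 'a \<Rightarrow> 'a) \<Rightarrow> 'a set \<Rightarrow> bool" where
  "diff_closed D S \<longleftrightarrow> (\<forall>i. \<forall>x\<in>S. D i x \<in> S)"

definition is_radical :: "'a::comm_ring_1 set \<Rightarrow> bool" where
  "is_radical I \<longleftrightarrow> (\<forall>x n. x ^ n \<in> I \<longrightarrow> x \<in> I)"

definition diff_spec :: "('i \<Rightarrow> 'a::comm_ring_1 \<Rightarrow> 'a) \<Rightarrow> 'a set set" where
  "diff_spec D = {P. is_prime_ideal P \<and> diff_closed D P}"

definition diff_V :: "('i \<Rightarrow> 'a::comm_ring_1 \<Rightarrow> 'a) \<Rightarrow> 'a set \<Rightarrow> 'a set set" where
  "diff_V D E = {P \<in> diff_spec D. E \<subseteq> P}"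

definition kolchin_topology :: "('i \<Rightarrow> 'a::comm_ring_1 \<Rightarrow> 'a) \<Rightarrow> 'a set topology" where
  "kolchin_topology D = topology (\<lambda>U. \<exists>E. U = diff_spec D - diff_V D E)"

text \<open>{E}: the smallest radical differential ideal containing E.\<close>
definition rad_diff_ideal_gen :: "('i \<Rightarrow> 'a::comm_ring_1 \<Rightarrow> 'a) \<Rightarrow> 'a set \<Rightarrow> 'a set" where
  "rad_diff_ideal_gen D E = \<Inter>{I. is_ideal I \<and> diff_closed D I \<and> is_radical I \<and> E \<subseteq> I}"

definition diff_subring :: "('i \<Rightarrow> 'a::comm_ring_1 \<Rightarrow> 'a) \<Rightarrow> 'a set \<Rightarrow> bool" where
  "diff_subring D S \<longleftrightarrow> 1 \<in> S \<and> (\<forall>x\<in>S. \<forall>y\<in>S. x + y \<in> S \<and> x * y \<in> S) \<and> (\<forall>x\<in>S. - x \<in> S)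
      \<and> diff_closed D S"

definition diff_subring_gen :: "('i \<Rightarrow> 'a::comm_ring_1 \<Rightarrow> 'a) \<Rightarrow> 'a set \<Rightarrow> 'a set" where
  "diff_subring_gen D X = \<Inter>{S. diff_subring D S \<and> X \<subseteq> S}"

end

theory Submission imports Defs begin

lemma ideal_zero: "is_ideal I \<Longrightarrow> 0 \<in> I" by (simp add: is_ideal_def)
lemma ideal_add: "is_ideal I \<Longrightarrow> x \<in> I \<Longrightarrow> y \<in> I \<Longrightarrow> x + y \<in> I" by (simp add: is_ideal_def)
lemma ideal_neg: "is_ideal I \<Longrightarrow> x \<in> I \<Longrightarrow> - x \<in> I" by (simp add: is_ideal_def)
lemma ideal_lmul: "is_ideal I \<Longrightarrow> x \<in> I \<Longrightarrow> r * x \<in> I" by (simp add: is_ideal_def)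
lemma ideal_rmul: "is_ideal I \<Longrightarrow> x \<in> I \<Longrightarrow> x * r \<in> I" by (metis ideal_lmul mult.commute)
lemma ideal_diff: "is_ideal I \<Longrightarrow> x \<in> I \<Longrightarrow> y \<in> I \<Longrightarrow> x - y \<in> I"
  by (metis ideal_add ideal_neg diff_conv_add_uminus)

lemma prime_ideal: "is_prime_ideal P \<Longrightarrow> is_ideal P" by (simp add: is_prime_ideal_def)
lemma prime_one: "is_prime_ideal P \<Longrightarrow> 1 \<notin> P"
  unfolding is_prime_ideal_def by (metis UNIV_eq_I ideal_lmul mult.right_neutral)
lemma prime_mul: "is_prime_ideal P \<Longrightarrow> x * y \<in> P \<Longrightarrow> x \<in> P \<or> y \<in> P"
  by (simp add: is_prime_ideal_def)
lemma prime_nmul: "is_prime_ideal P \<Longrightarrow> x \<notin> P \<Longrightarrow> y \<notin> P \<Longrightarrow> x * y \<notin> P"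
  using prime_mul by blast
lemma prime_radical: "is_prime_ideal P \<Longrightarrow> is_radical P"
  unfolding is_radical_def
proof (intro allI impI)
  fix x n assume P: "is_prime_ideal P" and "x ^ n \<in> P"
  then show "x \<in> P"
    by (induction n) (auto dest: prime_mul simp: prime_one)
qed

lemma kolchin_istop: "istopology (\<lambda>U. \<exists>E. U = diff_spec D - diff_V D E)"
  unfolding istopology_def
proof (intro conjI allI impI)
  fix S T assume "\<exists>E. S = diff_spec D - diff_V D E" "\<exists>E. T = diff_spec D - diff_V D E"
  then obtain E1 E2 where e: "S = diff_spec D - diff_V D E1" "T = diff_spec D - diff_V D E2" by blast
  have "S \<inter> T = diff_spec D - diff_V D {x * y | x y. x \<in> E1 \<and> y \<in> E2}"
  proof safe
    fix P assume "P \<in> S" "P \<in> T"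
    then obtain x y where "x \<in> E1" "x \<notin> P" "y \<in> E2" "y \<notin> P" "P \<in> diff_spec D"
      using e by (auto simp: diff_V_def)
    moreover then have "x * y \<notin> P" using prime_nmul by (auto simp: diff_spec_def)
    ultimately show "P \<in> diff_V D {x * y | x y. x \<in> E1 \<and> y \<in> E2} \<Longrightarrow> False"
      by (auto simp: diff_V_def)
  next
    fix P assume "P \<in> diff_spec D" "P \<notin> diff_V D {x * y | x y. x \<in> E1 \<and> y \<in> E2}"
    then have "\<not> E1 \<subseteq> P" "\<not> E2 \<subseteq> P"
      by (auto simp: diff_V_def diff_spec_def dest: prime_ideal intro: ideal_lmul ideal_rmul)
    then show "P \<in> S" "P \<in> T" using e \<open>P \<in> diff_spec D\<close> by (auto simp: diff_V_def)
  qed (use e in auto)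
  then show "\<exists>E. S \<inter> T = diff_spec D - diff_V D E" by blast
next
  fix K assume "\<forall>K\<in>K. \<exists>E. K = diff_spec D - diff_V D E"
  then obtain F where F: "\<forall>U\<in>K. U = diff_spec D - diff_V D (F U)" by metis
  have "\<Union>K = diff_spec D - diff_V D (\<Union>(F ` K))"
    using F by (auto simp: diff_V_def)
  then show "\<exists>E. \<Union>K = diff_spec D - diff_V D E" by blast
qed

lemma kolchin_open: "openin (kolchin_topology D) U \<longleftrightarrow> (\<exists>E. U = diff_spec D - diff_V D E)"
  unfolding kolchin_topology_def using topology_inverse'[OF kolchin_istop[of D]] by simp

lemma kolchin_topspace: "topspace (kolchin_topology D) = diff_spec D"
proof -
  have "diff_V D UNIV = {}"
    by (auto simp: diff_V_def diff_spec_def is_prime_ideal_def)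
  then have "openin (kolchin_topology D) (diff_spec D)" by (metis Diff_empty kolchin_open)
  then show ?thesis unfolding topspace_def using kolchin_open by blast
qed

lemma kolchin_closed: "closedin (kolchin_topology D) C \<longleftrightarrow> (\<exists>E. C = diff_V D E)"
  unfolding closedin_def kolchin_topspace kolchin_open
  by (auto simp: diff_V_def)


definition gmap :: "('a::comm_ring_1 \<Rightarrow> 'b::comm_ring_1) \<Rightarrow> 'a set \<Rightarrow> 'b set" where
  "gmap \<nu> p = {x. \<exists>c a. c \<notin> p \<and> a \<in> p \<and> \<nu> c * x = \<nu> a}"

context
  fixes DA :: "'i::finite \<Rightarrow> 'a::comm_ring_1 \<Rightarrow> 'a"
    and DB :: "'i \<Rightarrow> 'b::comm_ring_1 \<Rightarrow> 'b"
    and \<nu> :: "'a \<Rightarrow> 'b"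
    and \<eta> :: "nat \<Rightarrow> 'b"
    and m :: nat
  assumes A1: "diff_ring DA" and A2: "diff_ring DB"
    and A3: "diff_hom DA DB \<nu>"
    and A4: "diff_subring_gen DB (range \<nu> \<union> \<eta> ` {..<m}) = UNIV"
    and A5: "\<forall>j<m. \<exists>n. \<exists>b :: nat \<Rightarrow> 'a.
           (\<forall>k<n. \<nu> (b k) * \<eta> j \<in> range \<nu>) \<and> rad_diff_ideal_gen DA (b ` {..<n}) = UNIV"
begin

lemma nu_add: "\<nu> (x + y) = \<nu> x + \<nu> y" using A3 by (simp add: diff_hom_def ring_hom_fun_def)
lemma nu_mul: "\<nu> (x * y) = \<nu> x * \<nu> y" using A3 by (simp add: diff_hom_def ring_hom_fun_def)
lemma nu_one: "\<nu> 1 = 1" using A3 by (simp add: diff_hom_def ring_hom_fun_def)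
lemma nu_D: "\<nu> (DA i x) = DB i (\<nu> x)" using A3 by (simp add: diff_hom_def)
lemma nu_zero: "\<nu> 0 = 0" using nu_add[of 0 0] by simp
lemma nu_neg: "\<nu> (- x) = - \<nu> x"
proof -
  have "\<nu> x + \<nu> (- x) = 0" using nu_add[of x "-x"] nu_zero by simp
  then show ?thesis by (metis add_diff_cancel_left' diff_0)
qed
lemma nu_diff: "\<nu> (x - y) = \<nu> x - \<nu> y"
  using nu_add[of x "- y"] by (simp add: nu_neg)
lemma DB_mul: "DB i (x * y) = x * DB i y + DB i x * y"
  using A2 by (simp add: diff_ring_def derivation_def)


lemma deriv_step:
  assumes h: "\<nu> c * x = \<nu> a"
  shows "\<nu> (c * c) * DB i x = \<nu> (c * DA i a - DA i c * a)"
proof -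
  have h2: "\<nu> c * DB i x + \<nu> (DA i c) * x = \<nu> (DA i a)"
    using arg_cong[OF h, of "DB i"] by (simp add: DB_mul nu_D)
  have "\<nu> (c * c) * DB i x = \<nu> c * (\<nu> c * DB i x)" by (simp add: nu_mul mult.assoc)
  also have "\<dots> = \<nu> c * (\<nu> (DA i a) - \<nu> (DA i c) * x)" using h2 by (metis add_diff_cancel_right')
  also have "\<dots> = \<nu> c * \<nu> (DA i a) - \<nu> (DA i c) * (\<nu> c * x)" by (simp add: algebra_simps)
  also have "\<dots> = \<nu> (c * DA i a - DA i c * a)" using h by (simp add: nu_mul nu_diff)
  finally show ?thesis .
qed

lemma spec_facts:
  assumes "p \<in> diff_spec D"
  shows "is_prime_ideal p" "is_ideal p" "diff_closed D p"
  using assms by (auto simp: diff_spec_def is_prime_ideal_def)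

lemma KL:
  assumes p: "p \<in> diff_spec DA"
  shows "\<exists>c a. c \<notin> p \<and> \<nu> c * x = \<nu> a"
proof -
  note pf = spec_facts[OF p]
  define S where "S = {x. \<exists>c a. c \<notin> p \<and> \<nu> c * x = \<nu> a}"
  have one: "1 \<notin> p" using prime_one pf by blast
  have sub: "diff_subring DB S"
    unfolding diff_subring_def diff_closed_def
  proof (intro conjI ballI allI)
    have "\<nu> 1 * 1 = \<nu> 1" by simp
    then show "1 \<in> S" unfolding S_def using one by blast
  next
    fix x y assume "x \<in> S" "y \<in> S"
    then obtain c a c' a' where h: "c \<notin> p" "\<nu> c * x = \<nu> a" "c' \<notin> p" "\<nu> c' * y = \<nu> a'"
      unfolding S_def by blast
    have cc: "c * c' \<notin> p" using prime_nmul pf h by blast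
    have "\<nu> (c * c') * (x + y) = \<nu> c' * (\<nu> c * x) + \<nu> c * (\<nu> c' * y)"
      by (simp add: nu_mul algebra_simps)
    also have "\<dots> = \<nu> (c' * a + c * a')" using h by (simp add: nu_mul nu_add)
    finally show "x + y \<in> S" unfolding S_def using cc by blast
    have "\<nu> (c * c') * (x * y) = (\<nu> c * x) * (\<nu> c' * y)"
      by (simp add: nu_mul algebra_simps)
    also have "\<dots> = \<nu> (a * a')" using h by (simp add: nu_mul)
    finally show "x * y \<in> S" unfolding S_def using cc by blast
  next
    fix x assume "x \<in> S"
    then obtain c a where h: "c \<notin> p" "\<nu> c * x = \<nu> a" unfolding S_def by blast
    have "\<nu> c * (- x) = \<nu> (- a)" using h by (simp add: nu_neg)
    then show "- x \<in> S" unfolding S_def using h by blast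
  next
    fix i x assume "x \<in> S"
    then obtain c a where h: "c \<notin> p" "\<nu> c * x = \<nu> a" unfolding S_def by blast
    have "c * c \<notin> p" using prime_nmul pf h by blast
    then show "DB i x \<in> S" unfolding S_def using deriv_step[OF h(2)] by blast
  qed
  have gen: "range \<nu> \<union> \<eta> ` {..<m} \<subseteq> S"
  proof
    fix y assume "y \<in> range \<nu> \<union> \<eta> ` {..<m}"
    then show "y \<in> S"
    proof
      assume "y \<in> range \<nu>"
      then obtain a where "y = \<nu> a" by blast
      then have "\<nu> 1 * y = \<nu> a" by (simp add: nu_one)
      then show "y \<in> S" unfolding S_def using one by blast
    next
      assume "y \<in> \<eta> ` {..<m}"
      then obtain j where j: "j < m" "y = \<eta> j" by blast
      from A5 j(1) have "\<exists>n (b :: nat \<Rightarrow> 'a). (\<forall>k<n. \<nu> (b k) * \<eta> j \<in> range \<nu>) \<and>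
        rad_diff_ideal_gen DA (b ` {..<n}) = UNIV" by simp
      then obtain n and b :: "nat \<Rightarrow> 'a" where nb: "\<forall>k<n. \<nu> (b k) * \<eta> j \<in> range \<nu>"
        "rad_diff_ideal_gen DA (b ` {..<n}) = UNIV" by blast
      have "\<exists>k<n. b k \<notin> p"
      proof (rule ccontr)
        assume "\<not> ?thesis"
        then have bp: "b ` {..<n} \<subseteq> p" by auto
        have "rad_diff_ideal_gen DA (b ` {..<n}) \<subseteq> p"
          unfolding rad_diff_ideal_gen_def
        proof (rule Inter_lower, intro CollectI conjI)
          show "is_radical p" using pf prime_radical by blast
        qed (use pf bp in auto)
        then show False using nb one by blast
      qed
      then obtain k where "k < n" "b k \<notin> p" by blast
      then show "y \<in> S" unfolding S_def using nb j by blast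
    qed
  qed
  have "diff_subring_gen DB (range \<nu> \<union> \<eta> ` {..<m}) \<subseteq> S"
    unfolding diff_subring_gen_def by (rule Inter_lower) (use sub gen in blast)
  then have "UNIV \<subseteq> S" using A4 by simp
  then show ?thesis unfolding S_def by blast
qed


lemma contr_in:
  assumes q: "q \<in> diff_spec DB"
  shows "\<nu> -` q \<in> diff_V DA (\<nu> -` {0})"
proof -
  note qf = spec_facts[OF q]
  have id: "is_ideal (\<nu> -` q)"
    unfolding is_ideal_def
    proof (intro conjI ballI allI)
    show "0 \<in> \<nu> -` q" using ideal_zero[OF qf(2)] by (simp add: nu_zero)
  next
    fix x y assume "x \<in> \<nu> -` q" "y \<in> \<nu> -` q"
    then show "x + y \<in> \<nu> -` q" using ideal_add[OF qf(2)] by (simp add: nu_add)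
  next
    fix x assume "x \<in> \<nu> -` q"
    then show "- x \<in> \<nu> -` q" using ideal_neg[OF qf(2)] by (simp add: nu_neg)
  next
    fix r x assume "x \<in> \<nu> -` q"
    then show "r * x \<in> \<nu> -` q" using ideal_lmul[OF qf(2)] by (simp add: nu_mul)
  qed
  have "1 \<notin> \<nu> -` q" using prime_one[OF qf(1)] by (simp add: nu_one)
  then have ne: "\<nu> -` q \<noteq> UNIV" by blast
  have pr: "\<forall>x y. x * y \<in> \<nu> -` q \<longrightarrow> x \<in> \<nu> -` q \<or> y \<in> \<nu> -` q"
    using prime_mul[OF qf(1)] by (simp add: nu_mul)
  have dc: "diff_closed DA (\<nu> -` q)"
    using qf(3) by (simp add: diff_closed_def nu_D)
  have "\<nu> -` {0} \<subseteq> \<nu> -` q" using ideal_zero[OF qf(2)] by auto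
  then show ?thesis using id ne pr dc
    by (simp add: diff_V_def diff_spec_def is_prime_ideal_def)
qed

lemma g_contr:
  assumes q: "q \<in> diff_spec DB"
  shows "gmap \<nu> (\<nu> -` q) = q"
proof -
  note qf = spec_facts[OF q]
  have p: "\<nu> -` q \<in> diff_spec DA" using contr_in[OF q] by (simp add: diff_V_def)
  show ?thesis
  proof safe
    fix x assume "x \<in> gmap \<nu> (\<nu> -` q)"
    then obtain c a where h: "\<nu> c \<notin> q" "\<nu> a \<in> q" "\<nu> c * x = \<nu> a"
      unfolding gmap_def by auto
    then show "x \<in> q" using prime_mul[OF qf(1), of "\<nu> c" x] by simp
  next
    fix x assume "x \<in> q"
    obtain c a where h: "c \<notin> \<nu> -` q" "\<nu> c * x = \<nu> a" using KL[OF p] by blast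
    have "\<nu> a \<in> q" using h(2) ideal_lmul[OF qf(2) \<open>x \<in> q\<close>] by metis
    then show "x \<in> gmap \<nu> (\<nu> -` q)" unfolding gmap_def using h by blast
  qed
qed

lemma g_props:
  assumes pV: "p \<in> diff_V DA (\<nu> -` {0})"
  shows "gmap \<nu> p \<in> diff_spec DB" "\<nu> -` gmap \<nu> p = p"
proof -
  have p: "p \<in> diff_spec DA" and ker: "\<nu> -` {0} \<subseteq> p" using pV by (auto simp: diff_V_def)
  note pf = spec_facts[OF p]
  have one: "1 \<notin> p" using prime_one pf by blast
  have core: "\<nu> c * \<nu> x = \<nu> a \<Longrightarrow> c \<notin> p \<Longrightarrow> a \<in> p \<Longrightarrow> x \<in> p" for c x a
  proof -
    assume h: "\<nu> c * \<nu> x = \<nu> a" "c \<notin> p" "a \<in> p"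
    have "\<nu> (c * x - a) = 0" using h(1) by (simp add: nu_diff nu_mul)
    then have "c * x - a \<in> p" using ker by auto
    then have "c * x - a + a \<in> p" using ideal_add[OF pf(2)] h(3) by blast
    then have "c * x \<in> p" by simp
    then show "x \<in> p" using prime_mul[OF pf(1)] h(2) by blast
  qed
  show pre: "\<nu> -` gmap \<nu> p = p"
  proof safe
    fix x assume "\<nu> x \<in> gmap \<nu> p"
    then obtain c a where "c \<notin> p" "a \<in> p" "\<nu> c * \<nu> x = \<nu> a" unfolding gmap_def by blast
    then show "x \<in> p" using core by blast
  next
    fix x assume "x \<in> p"
    then have "\<nu> x \<in> gmap \<nu> p" unfolding gmap_def using one
      by (intro CollectI exI[of _ 1] exI[of _ x]) (simp add: nu_one)
    then show "x \<in> \<nu> -` gmap \<nu> p" by simp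
  qed
  have id: "is_ideal (gmap \<nu> p)"
    unfolding is_ideal_def
  proof (intro conjI ballI allI)
    have "0 \<in> \<nu> -` gmap \<nu> p" using pre ideal_zero[OF pf(2)] by simp
    then show "0 \<in> gmap \<nu> p" using nu_zero by simp
  next
    fix x y assume "x \<in> gmap \<nu> p" "y \<in> gmap \<nu> p"
    then obtain c a c' a' where h: "c \<notin> p" "a \<in> p" "\<nu> c * x = \<nu> a"
        "c' \<notin> p" "a' \<in> p" "\<nu> c' * y = \<nu> a'"
      unfolding gmap_def by blast
    have cc: "c * c' \<notin> p" using prime_nmul pf h by blast
    have "\<nu> (c * c') * (x + y) = \<nu> c' * (\<nu> c * x) + \<nu> c * (\<nu> c' * y)"
      by (simp add: nu_mul algebra_simps)
    also have "\<dots> = \<nu> (c' * a + c * a')" using h by (simp add: nu_mul nu_add)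
    finally have "\<nu> (c * c') * (x + y) = \<nu> (c' * a + c * a')" .
    moreover have "c' * a + c * a' \<in> p"
      using ideal_add[OF pf(2) ideal_lmul[OF pf(2) h(2)] ideal_lmul[OF pf(2) h(5)]] .
    ultimately show "x + y \<in> gmap \<nu> p" unfolding gmap_def using cc by blast
  next
    fix x assume "x \<in> gmap \<nu> p"
    then obtain c a where h: "c \<notin> p" "a \<in> p" "\<nu> c * x = \<nu> a" unfolding gmap_def by blast
    have "\<nu> c * (- x) = \<nu> (- a)" using h by (simp add: nu_neg)
    moreover have "- a \<in> p" using h ideal_neg pf by blast
    ultimately show "- x \<in> gmap \<nu> p" unfolding gmap_def using h by blast
  next
    fix r x assume "x \<in> gmap \<nu> p"
    then obtain c a where h: "c \<notin> p" "a \<in> p" "\<nu> c * x = \<nu> a" unfolding gmap_def by blast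
    obtain d e where h2: "d \<notin> p" "\<nu> d * r = \<nu> e" using KL[OF p] by blast
    have cc: "d * c \<notin> p" using prime_nmul pf h h2 by blast
    have "\<nu> (d * c) * (r * x) = (\<nu> d * r) * (\<nu> c * x)" by (simp add: nu_mul algebra_simps)
    also have "\<dots> = \<nu> (e * a)" using h h2 by (simp add: nu_mul)
    finally have "\<nu> (d * c) * (r * x) = \<nu> (e * a)" .
    moreover have "e * a \<in> p" using h pf ideal_lmul by blast
    ultimately show "r * x \<in> gmap \<nu> p" unfolding gmap_def using cc by blast
  qed
  have "1 \<notin> \<nu> -` gmap \<nu> p" using pre one by simp
  then have "1 \<notin> gmap \<nu> p" using nu_one by simp
  then have ne: "gmap \<nu> p \<noteq> UNIV" by blast
  have pr: "\<forall>x y. x * y \<in> gmap \<nu> p \<longrightarrow> x \<in> gmap \<nu> p \<or> y \<in> gmap \<nu> p"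
  proof (intro allI impI)
    fix x y assume "x * y \<in> gmap \<nu> p"
    then obtain c a where h: "c \<notin> p" "a \<in> p" "\<nu> c * (x * y) = \<nu> a" unfolding gmap_def by blast
    obtain d e where h1: "d \<notin> p" "\<nu> d * x = \<nu> e" using KL[OF p] by blast
    obtain d' e' where h2: "d' \<notin> p" "\<nu> d' * y = \<nu> e'" using KL[OF p] by blast
    have "\<nu> (c * (e * e')) = \<nu> c * ((\<nu> d * x) * (\<nu> d' * y))"
      using h1 h2 by (simp add: nu_mul)
    also have "\<dots> = \<nu> (d * d') * (\<nu> c * (x * y))"
      by (simp add: nu_mul algebra_simps)
    also have "\<dots> = \<nu> (d * d' * a)" using h by (simp add: nu_mul)
    finally have "\<nu> (c * (e * e') - d * d' * a) = 0" by (simp add: nu_diff)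
    then have k: "c * (e * e') - d * d' * a \<in> p" using ker by auto
    have "d * d' * a \<in> p" using h pf ideal_lmul by blast
    then have "c * (e * e') - d * d' * a + d * d' * a \<in> p" using k ideal_add pf by blast
    then have "c * (e * e') \<in> p" by simp
    then have "e \<in> p \<or> e' \<in> p" using prime_mul[OF pf(1)] h(1) by blast
    then show "x \<in> gmap \<nu> p \<or> y \<in> gmap \<nu> p" unfolding gmap_def using h1 h2 by blast
  qed
  have dc: "diff_closed DB (gmap \<nu> p)"
    unfolding diff_closed_def
  proof (intro allI ballI)
    fix i x assume "x \<in> gmap \<nu> p"
    then obtain c a where h: "c \<notin> p" "a \<in> p" "\<nu> c * x = \<nu> a" unfolding gmap_def by blast
    have "c * c \<notin> p" using prime_nmul pf h by blast
    moreover have "c * DA i a - DA i c * a \<in> p"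
      proof -
      have "DA i a \<in> p" using h(2) pf(3) by (simp add: diff_closed_def)
      then show ?thesis
        using ideal_diff[OF pf(2) ideal_lmul[OF pf(2)] ideal_lmul[OF pf(2) h(2)]] by blast
    qed
    ultimately show "DB i x \<in> gmap \<nu> p" unfolding gmap_def using deriv_step[OF h(3)] by blast
  qed
  show "gmap \<nu> p \<in> diff_spec DB" using id ne pr dc
    by (simp add: diff_spec_def is_prime_ideal_def)
qed


lemma V0_sub: "diff_V DA (\<nu> -` {0}) \<subseteq> diff_spec DA" by (auto simp: diff_V_def)

lemma main_homeo:
  "homeomorphic_map (kolchin_topology DB)
           (subtopology (kolchin_topology DA) (diff_V DA (\<nu> -` {0}))) (\<lambda>q. \<nu> -` q)"
proof -
  let ?V0 = "diff_V DA (\<nu> -` {0})"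
  have tY: "topspace (subtopology (kolchin_topology DA) ?V0) = ?V0"
    using V0_sub by (auto simp: kolchin_topspace)
  have tX: "topspace (kolchin_topology DB) = diff_spec DB" by (rule kolchin_topspace)
  have cf: "continuous_map (kolchin_topology DB) (subtopology (kolchin_topology DA) ?V0) (\<lambda>q. \<nu> -` q)"
    unfolding continuous_map_closedin tY tX
  proof (intro conjI allI impI)
    show "(\<lambda>q. \<nu> -` q) \<in> diff_spec DB \<rightarrow> ?V0" using contr_in by blast
  next
    fix C assume "closedin (subtopology (kolchin_topology DA) ?V0) C"
    then obtain E where C: "C = diff_V DA E \<inter> ?V0"
      unfolding closedin_subtopology kolchin_closed by blast
    have "{x \<in> diff_spec DB. \<nu> -` x \<in> C} = diff_V DB (\<nu> ` E)"
      using contr_in unfolding C by (auto simp: diff_V_def)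
    then show "closedin (kolchin_topology DB) {x \<in> diff_spec DB. \<nu> -` x \<in> C}"
      unfolding kolchin_closed by blast
  qed
  have cg: "continuous_map (subtopology (kolchin_topology DA) ?V0) (kolchin_topology DB) (gmap \<nu>)"
    unfolding continuous_map_closedin tY tX
  proof (intro conjI allI impI)
    show "gmap \<nu> \<in> ?V0 \<rightarrow> diff_spec DB" using g_props(1) by blast
  next
    fix C assume "closedin (kolchin_topology DB) C"
    then obtain E where C: "C = diff_V DB E" unfolding kolchin_closed by blast
    define E' where "E' = {a. \<exists>c x. x \<in> E \<and> \<nu> c * x = \<nu> a}"
    have "{x \<in> ?V0. gmap \<nu> x \<in> C} = diff_V DA E' \<inter> ?V0"
    proof (intro set_eqI iffI)
      fix p assume "p \<in> {x \<in> ?V0. gmap \<nu> x \<in> C}"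
      then have pV: "p \<in> ?V0" and EG: "E \<subseteq> gmap \<nu> p" unfolding C diff_V_def by auto
      note gp = g_props[OF pV]
      have "E' \<subseteq> p"
      proof
        fix a assume "a \<in> E'"
        then obtain c x where cx: "x \<in> E" "\<nu> c * x = \<nu> a" unfolding E'_def by blast
        have "\<nu> c * x \<in> gmap \<nu> p"
          using ideal_lmul[OF spec_facts(2)[OF gp(1)]] EG cx(1) by blast
        then have "a \<in> \<nu> -` gmap \<nu> p" using cx(2) by simp
        then show "a \<in> p" using gp(2) by simp
      qed
      then show "p \<in> diff_V DA E' \<inter> ?V0" using pV by (auto simp: diff_V_def)
    next
      fix p assume "p \<in> diff_V DA E' \<inter> ?V0"
      then have pV: "p \<in> ?V0" and E'p: "E' \<subseteq> p" by (auto simp: diff_V_def)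
      have p: "p \<in> diff_spec DA" using pV V0_sub by blast
      note gp = g_props[OF pV]
      have "E \<subseteq> gmap \<nu> p"
      proof
        fix x assume "x \<in> E"
        obtain c a where h: "c \<notin> p" "\<nu> c * x = \<nu> a" using KL[OF p] by blast
        have "a \<in> E'" unfolding E'_def using h \<open>x \<in> E\<close> by blast
        then show "x \<in> gmap \<nu> p" unfolding gmap_def using h E'p by blast
      qed
      then show "p \<in> {x \<in> ?V0. gmap \<nu> x \<in> C}" using pV gp(1) unfolding C by (auto simp: diff_V_def)
    qed
    then show "closedin (subtopology (kolchin_topology DA) ?V0) {x \<in> ?V0. gmap \<nu> x \<in> C}"
      unfolding closedin_subtopology kolchin_closed by blast
  qed
  have "homeomorphic_maps (kolchin_topology DB) (subtopology (kolchin_topology DA) ?V0)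
      (\<lambda>q. \<nu> -` q) (gmap \<nu>)"
    unfolding homeomorphic_maps_def tY tX using cf cg g_contr g_props(2) by blast
  then show ?thesis unfolding homeomorphic_map_maps by blast
qed

end

theorem lemma2p3:
  fixes DA :: "'i::finite \<Rightarrow> 'a::comm_ring_1 \<Rightarrow> 'a"
    and DB :: "'i \<Rightarrow> 'b::comm_ring_1 \<Rightarrow> 'b"
    and \<nu> :: "'a \<Rightarrow> 'b"
    and \<eta> :: "nat \<Rightarrow> 'b"
    and m :: nat
  assumes "diff_ring DA" and "diff_ring DB"
    and "diff_hom DA DB \<nu>"
    and "diff_subring_gen DB (range \<nu> \<union> \<eta> ` {..<m}) = UNIV"
    and "\<forall>j<m. \<exists>n. \<exists>b :: nat \<Rightarrow> 'a.
           (\<forall>k<n. \<nu> (b k) * \<eta> j \<in> range \<nu>) \<and> rad_diff_ideal_gen DA (b ` {..<n}) = UNIV"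
  shows "homeomorphic_map (kolchin_topology DB)
           (subtopology (kolchin_topology DA) (diff_V DA (\<nu> -` {0}))) (\<lambda>q. \<nu> -` q)"
  by (rule main_homeo[OF assms])

end
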